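(* Let $A$ be a differential ring, $X=\operatorname{Spec}^\Delta A$, and let $D$ be a differential subring of $\mathcal O'(X)$ containing $\iota'(A)$. Let $\iota'\colon A\to D$ denote the corresponding homomorphism. Then $\iota'^*\colon\operatorname{Spec}^\Delta D\to\operatorname{Spec}^\Delta A$, $\mathfrak q\mapsto\iota'^{-1}(\mathfrak q)$, is a homeomorphism.
   Context: All rings are commutative with unit. A differential ring is a ring with finitely many pairwise commuting derivations. $\operatorname{Spec}^\Delta R$ is the set of prime ideals of a differential ring $R$ closed under all derivations, with the Kolchin topology (closed sets $V(E)=\{\mathfrak p: E\subseteq\mathfrak p\}$). For $\mathfrak p\in X$, $K(\mathfrak p)$ is the fraction field of $A/\mathfrak p$ with the induced derivations. For an open $U\subseteq X$, $\mathcal O'(U)$ is the set of functions $f$ on $U$ with $f(\mathfrak p)\in K(\mathfrak p)$ that are regular at every point of $U$, where $f$ is regular at $\mathfrak p$ if there exist an open neighborhood $W\subseteq U$ of $\mathfrak p$ and $a,b\in A$ with $b\notin\mathfrak q$ and $f(\mathfrak q)=a/b$ in $K(\mathfrak q)$ for all $\mathfrak q\in W$. With pointwise operations and pointwise derivations, $\mathcal O'(U)$ is a differential ring. The differential homomorphism $\iota'\colon A\to\mathcal O'(X)$ sends $a$ to the function $\mathfrak p\mapsto (a\bmod\mathfrak p)\in K(\mathfrak p)$. *)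

theory Defs
  imports "HOL-Algebra.Algebra" "HOL-Analysis.Abstract_Topology"
begin

definition is_derivation :: "('a, 'm) ring_scheme \<Rightarrow> ('a \<Rightarrow> 'a) \<Rightarrow> bool" where
  "is_derivation R d \<longleftrightarrow> d \<in> carrier R \<rightarrow> carrier R \<and>
     (\<forall>x\<in>carrier R. \<forall>y\<in>carrier R.
        d (x \<oplus>\<^bsub>R\<^esub> y) = d x \<oplus>\<^bsub>R\<^esub> d y \<and>
        d (x \<otimes>\<^bsub>R\<^esub> y) = (d x \<otimes>\<^bsub>R\<^esub> y) \<oplus>\<^bsub>R\<^esub> (x \<otimes>\<^bsub>R\<^esub> d y))"

definition diff_ring :: "('a, 'm) ring_scheme \<Rightarrow> 'i set \<Rightarrow> ('i \<Rightarrow> 'a \<Rightarrow> 'a) \<Rightarrow> bool" where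
  "diff_ring R I \<delta> \<longleftrightarrow> cring R \<and> finite I \<and> (\<forall>i\<in>I. is_derivation R (\<delta> i)) \<and>
     (\<forall>i\<in>I. \<forall>j\<in>I. \<forall>x\<in>carrier R. \<delta> i (\<delta> j x) = \<delta> j (\<delta> i x))"

definition diff_spec :: "('a, 'm) ring_scheme \<Rightarrow> 'i set \<Rightarrow> ('i \<Rightarrow> 'a \<Rightarrow> 'a) \<Rightarrow> 'a set set" where
  "diff_spec R I \<delta> = {P. primeideal P R \<and> (\<forall>i\<in>I. \<forall>x\<in>P. \<delta> i x \<in> P)}"

definition kolchin_V :: "('a, 'm) ring_scheme \<Rightarrow> 'i set \<Rightarrow> ('i \<Rightarrow> 'a \<Rightarrow> 'a) \<Rightarrow> 'a set \<Rightarrow> 'a set set" where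
  "kolchin_V R I \<delta> E = {P \<in> diff_spec R I \<delta>. E \<subseteq> P}"

definition kolchin_topology :: "('a, 'm) ring_scheme \<Rightarrow> 'i set \<Rightarrow> ('i \<Rightarrow> 'a \<Rightarrow> 'a) \<Rightarrow> 'a set topology" where
  "kolchin_topology R I \<delta> =
     topology (\<lambda>U. \<exists>E. E \<subseteq> carrier R \<and> U = diff_spec R I \<delta> - kolchin_V R I \<delta> E)"

section \<open>The fraction field K(p) of R/p, as classes of pairs (a,b), b not in p\<close>

definition frac_rel :: "('a, 'm) ring_scheme \<Rightarrow> 'a set \<Rightarrow> (('a \<times> 'a) \<times> ('a \<times> 'a)) set" where
  "frac_rel R p = {((a, b), (c, d)). a \<in> carrier R \<and> b \<in> carrier R - p \<and>
      c \<in> carrier R \<and> d \<in> carrier R - p \<and> (a \<otimes>\<^bsub>R\<^esub> d) \<ominus>\<^bsub>R\<^esub> (c \<otimes>\<^bsub>R\<^esub> b) \<in> p}"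

definition frac :: "('a, 'm) ring_scheme \<Rightarrow> 'a set \<Rightarrow> 'a \<Rightarrow> 'a \<Rightarrow> ('a \<times> 'a) set" where
  "frac R p a b = frac_rel R p `` {(a, b)}"

definition frac_field_carrier :: "('a, 'm) ring_scheme \<Rightarrow> 'a set \<Rightarrow> ('a \<times> 'a) set set" where
  "frac_field_carrier R p = {frac R p a b | a b. a \<in> carrier R \<and> b \<in> carrier R - p}"

definition frac_rep :: "('a \<times> 'a) set \<Rightarrow> 'a \<times> 'a" where
  "frac_rep x = (SOME ab. ab \<in> x)"

definition frac_add :: "('a, 'm) ring_scheme \<Rightarrow> 'a set \<Rightarrow> ('a \<times> 'a) set \<Rightarrow> ('a \<times> 'a) set \<Rightarrow> ('a \<times> 'a) set" where
  "frac_add R p x y = (case frac_rep x of (a, b) \<Rightarrow> case frac_rep y of (c, d) \<Rightarrow>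
      frac R p ((a \<otimes>\<^bsub>R\<^esub> d) \<oplus>\<^bsub>R\<^esub> (c \<otimes>\<^bsub>R\<^esub> b)) (b \<otimes>\<^bsub>R\<^esub> d))"

definition frac_mul :: "('a, 'm) ring_scheme \<Rightarrow> 'a set \<Rightarrow> ('a \<times> 'a) set \<Rightarrow> ('a \<times> 'a) set \<Rightarrow> ('a \<times> 'a) set" where
  "frac_mul R p x y = (case frac_rep x of (a, b) \<Rightarrow> case frac_rep y of (c, d) \<Rightarrow>
      frac R p (a \<otimes>\<^bsub>R\<^esub> c) (b \<otimes>\<^bsub>R\<^esub> d))"

definition frac_der :: "('a, 'm) ring_scheme \<Rightarrow> 'a set \<Rightarrow> ('a \<Rightarrow> 'a) \<Rightarrow> ('a \<times> 'a) set \<Rightarrow> ('a \<times> 'a) set" where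
  "frac_der R p d x = (case frac_rep x of (a, b) \<Rightarrow>
      frac R p ((d a \<otimes>\<^bsub>R\<^esub> b) \<ominus>\<^bsub>R\<^esub> (a \<otimes>\<^bsub>R\<^esub> d b)) (b \<otimes>\<^bsub>R\<^esub> b))"

text \<open>Functions are extensional: value undefined outside the domain U.\<close>
definition regular_at :: "('a, 'm) ring_scheme \<Rightarrow> 'i set \<Rightarrow> ('i \<Rightarrow> 'a \<Rightarrow> 'a) \<Rightarrow> 'a set set
    \<Rightarrow> ('a set \<Rightarrow> ('a \<times> 'a) set) \<Rightarrow> 'a set \<Rightarrow> bool" where
  "regular_at R I \<delta> U f P \<longleftrightarrow> (\<exists>W a b. openin (kolchin_topology R I \<delta>) W \<and> P \<in> W \<and> W \<subseteq> U \<and>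
      a \<in> carrier R \<and> b \<in> carrier R \<and> (\<forall>Q\<in>W. b \<notin> Q \<and> f Q = frac R Q a b))"

definition O_sections :: "('a, 'm) ring_scheme \<Rightarrow> 'i set \<Rightarrow> ('i \<Rightarrow> 'a \<Rightarrow> 'a) \<Rightarrow> 'a set set
    \<Rightarrow> ('a set \<Rightarrow> ('a \<times> 'a) set) set" where
  "O_sections R I \<delta> U = {f. (\<forall>P\<in>U. f P \<in> frac_field_carrier R P \<and> regular_at R I \<delta> U f P) \<and>
      (\<forall>P. P \<notin> U \<longrightarrow> f P = undefined)}"

definition O_ring :: "('a, 'm) ring_scheme \<Rightarrow> 'i set \<Rightarrow> ('i \<Rightarrow> 'a \<Rightarrow> 'a) \<Rightarrow> ('a set \<Rightarrow> ('a \<times> 'a) set) ring" where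
  "O_ring R I \<delta> =
     \<lparr>carrier = O_sections R I \<delta> (diff_spec R I \<delta>),
      monoid.mult = (\<lambda>f g P. if P \<in> diff_spec R I \<delta> then frac_mul R P (f P) (g P) else undefined),
      monoid.one = (\<lambda>P. if P \<in> diff_spec R I \<delta> then frac R P \<one>\<^bsub>R\<^esub> \<one>\<^bsub>R\<^esub> else undefined),
      ring.zero = (\<lambda>P. if P \<in> diff_spec R I \<delta> then frac R P \<zero>\<^bsub>R\<^esub> \<one>\<^bsub>R\<^esub> else undefined),
      ring.add = (\<lambda>f g P. if P \<in> diff_spec R I \<delta> then frac_add R P (f P) (g P) else undefined)\<rparr>"

definition O_der :: "('a, 'm) ring_scheme \<Rightarrow> 'i set \<Rightarrow> ('i \<Rightarrow> 'a \<Rightarrow> 'a) \<Rightarrow> 'i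
    \<Rightarrow> ('a set \<Rightarrow> ('a \<times> 'a) set) \<Rightarrow> ('a set \<Rightarrow> ('a \<times> 'a) set)" where
  "O_der R I \<delta> i f = (\<lambda>P. if P \<in> diff_spec R I \<delta> then frac_der R P (\<delta> i) (f P) else undefined)"

definition iota' :: "('a, 'm) ring_scheme \<Rightarrow> 'i set \<Rightarrow> ('i \<Rightarrow> 'a \<Rightarrow> 'a) \<Rightarrow> 'a \<Rightarrow> ('a set \<Rightarrow> ('a \<times> 'a) set)" where
  "iota' R I \<delta> a = (\<lambda>P. if P \<in> diff_spec R I \<delta> then frac R P a \<one>\<^bsub>R\<^esub> else undefined)"

end

theory Submission
  imports Defs
begin

definition Kf :: "('a, 'm) ring_scheme \<Rightarrow> 'a set \<Rightarrow> ('a \<times> 'a) set ring" where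
  "Kf R P = \<lparr>carrier = frac_field_carrier R P, monoid.mult = frac_mul R P, monoid.one = frac R P \<one>\<^bsub>R\<^esub> \<one>\<^bsub>R\<^esub>,
     ring.zero = frac R P \<zero>\<^bsub>R\<^esub> \<one>\<^bsub>R\<^esub>, ring.add = frac_add R P\<rparr>"

lemma (in ideal) comb2:
  "u \<in> I \<Longrightarrow> v \<in> I \<Longrightarrow> s \<in> carrier R \<Longrightarrow> t \<in> carrier R \<Longrightarrow> s \<otimes> u \<oplus> t \<otimes> v \<in> I"
  by (meson I_l_closed additive_subgroup.a_closed additive_subgroup_axioms)

context primeideal begin

lemma Icar: "x \<in> I \<Longrightarrow> x \<in> carrier R"
  using a_subset by blast

lemma prod_notin[simp]: "b \<in> carrier R \<Longrightarrow> d \<in> carrier R \<Longrightarrow> (b \<otimes> d \<in> I) = (b \<in> I \<or> d \<in> I)"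
  using I_prime I_l_closed I_r_closed by blast

lemma one_notin[simp]: "\<one> \<notin> I"
  using I_notcarr one_imp_carrier by blast

lemma minus_in: "x \<in> carrier R \<Longrightarrow> y \<in> carrier R \<Longrightarrow> x \<ominus> y \<in> I \<Longrightarrow> y \<ominus> x \<in> I"
proof -
  assume a: "x \<in> carrier R" "y \<in> carrier R" "x \<ominus> y \<in> I"
  have "y \<ominus> x = \<ominus> (x \<ominus> y)" using a by algebra
  thus ?thesis using a by (simp add: a_inv_closed)
qed

lemma frac_equiv: "equiv (carrier R \<times> (carrier R - I)) (frac_rel R I)"
proof (rule equivI)
  show "refl_on (carrier R \<times> (carrier R - I)) (frac_rel R I)"
    unfolding refl_on_def frac_rel_def by (auto simp: r_neg additive_subgroup.zero_closed[OF additive_subgroup_axioms] minus_eq)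
  show "frac_rel R I \<subseteq> (carrier R \<times> (carrier R - I)) \<times> (carrier R \<times> (carrier R - I))"
    unfolding frac_rel_def by auto
  show "sym (frac_rel R I)"
    unfolding sym_def frac_rel_def by (auto intro: minus_in)
  show "trans (frac_rel R I)"
  proof (rule transI)
    fix x y z assume xy: "(x,y) \<in> frac_rel R I" and yz: "(y,z) \<in> frac_rel R I"
    obtain a b where x: "x = (a,b)" by force
    obtain c d where y: "y = (c,d)" by force
    obtain e f where z: "z = (e,f)" by force
    from xy yz have c: "a \<in> carrier R" "b \<in> carrier R" "c \<in> carrier R" "d \<in> carrier R" "e \<in> carrier R" "f \<in> carrier R"
      "b \<notin> I" "d \<notin> I" "f \<notin> I" and u: "a \<otimes> d \<ominus> c \<otimes> b \<in> I" and v: "c \<otimes> f \<ominus> e \<otimes> d \<in> I"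
      unfolding x y z frac_rel_def by auto
    have "d \<otimes> (a \<otimes> f \<ominus> e \<otimes> b) = f \<otimes> (a \<otimes> d \<ominus> c \<otimes> b) \<oplus> b \<otimes> (c \<otimes> f \<ominus> e \<otimes> d)"
      using c by algebra
    also have "\<dots> \<in> I" using comb2[OF u v] c by simp
    finally have "a \<otimes> f \<ominus> e \<otimes> b \<in> I" using c I_prime by (meson m_closed minus_closed)
    thus "(x,z) \<in> frac_rel R I" using c unfolding x z frac_rel_def by auto
  qed
qed

lemma frac_eq_iff:
  assumes "a \<in> carrier R" "b \<in> carrier R" "c \<in> carrier R" "d \<in> carrier R" "b \<notin> I" "d \<notin> I"
  shows "frac R I a b = frac R I c d \<longleftrightarrow> a \<otimes> d \<ominus> c \<otimes> b \<in> I"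
proof -
  have "frac R I a b = frac R I c d \<longleftrightarrow> ((a,b),(c,d)) \<in> frac_rel R I"
    using equiv_class_eq_iff[OF frac_equiv, of "(a,b)" "(c,d)"] assms unfolding frac_def by auto
  thus ?thesis using assms unfolding frac_rel_def by auto
qed

lemma frac_eqI:
  assumes "a \<in> carrier R" "b \<in> carrier R" "c \<in> carrier R" "d \<in> carrier R" "b \<notin> I" "d \<notin> I"
    and "a \<otimes> d = c \<otimes> b"
  shows "frac R I a b = frac R I c d"
  using assms by (simp add: frac_eq_iff r_neg minus_eq additive_subgroup.zero_closed[OF additive_subgroup_axioms])

lemma frac_zero_iff:
  assumes "a \<in> carrier R" "b \<in> carrier R" "b \<notin> I"
  shows "frac R I a b = frac R I \<zero> \<one> \<longleftrightarrow> a \<in> I"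
  using assms by (simp add: frac_eq_iff minus_eq)

lemma frac_mem: "a \<in> carrier R \<Longrightarrow> b \<in> carrier R \<Longrightarrow> b \<notin> I \<Longrightarrow> (a,b) \<in> frac R I a b"
  using frac_equiv unfolding frac_def equiv_def refl_on_def by auto

lemma frac_rep:
  assumes "a \<in> carrier R" "b \<in> carrier R" "b \<notin> I"
  obtains a' b' where "frac_rep (frac R I a b) = (a',b')" "a' \<in> carrier R" "b' \<in> carrier R" "b' \<notin> I"
    "frac R I a' b' = frac R I a b"
proof -
  have "frac_rep (frac R I a b) \<in> frac R I a b"
    unfolding frac_rep_def using frac_mem[OF assms] by (rule someI)
  then obtain a' b' where r: "frac_rep (frac R I a b) = (a',b')" "((a,b),(a',b')) \<in> frac_rel R I"
    unfolding frac_def by (metis Image_singleton_iff surj_pair)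
  hence c: "a' \<in> carrier R" "b' \<in> carrier R" "b' \<notin> I" unfolding frac_rel_def by auto
  have "frac R I a' b' = frac R I a b"
    using equiv_class_eq[OF frac_equiv r(2)] unfolding frac_def by simp
  with r c that show ?thesis by blast
qed

lemma frac_add_eq:
  assumes "a \<in> carrier R" "b \<in> carrier R" "b \<notin> I" "c \<in> carrier R" "d \<in> carrier R" "d \<notin> I"
  shows "frac_add R I (frac R I a b) (frac R I c d) = frac R I (a \<otimes> d \<oplus> c \<otimes> b) (b \<otimes> d)"
proof -
  obtain a' b' where r1: "frac_rep (frac R I a b) = (a',b')" "a' \<in> carrier R" "b' \<in> carrier R" "b' \<notin> I"
    "frac R I a' b' = frac R I a b" using frac_rep assms by metis
  obtain c' d' where r2: "frac_rep (frac R I c d) = (c',d')" "c' \<in> carrier R" "d' \<in> carrier R" "d' \<notin> I"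
    "frac R I c' d' = frac R I c d" using frac_rep assms by metis
  have u: "a' \<otimes> b \<ominus> a \<otimes> b' \<in> I" using r1 assms frac_eq_iff by blast
  have v: "c' \<otimes> d \<ominus> c \<otimes> d' \<in> I" using r2 assms frac_eq_iff by blast
  have "(a' \<otimes> d' \<oplus> c' \<otimes> b') \<otimes> (b \<otimes> d) \<ominus> (a \<otimes> d \<oplus> c \<otimes> b) \<otimes> (b' \<otimes> d')
     = (d \<otimes> d') \<otimes> (a' \<otimes> b \<ominus> a \<otimes> b') \<oplus> (b \<otimes> b') \<otimes> (c' \<otimes> d \<ominus> c \<otimes> d')"
    using assms r1 r2 by algebra
  also have "\<dots> \<in> I" using comb2[OF u v] assms r1 r2 by simp
  finally show ?thesis unfolding frac_add_def r1(1) r2(1) using assms r1 r2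
    by (simp add: frac_eq_iff)
qed

lemma frac_mul_eq:
  assumes "a \<in> carrier R" "b \<in> carrier R" "b \<notin> I" "c \<in> carrier R" "d \<in> carrier R" "d \<notin> I"
  shows "frac_mul R I (frac R I a b) (frac R I c d) = frac R I (a \<otimes> c) (b \<otimes> d)"
proof -
  obtain a' b' where r1: "frac_rep (frac R I a b) = (a',b')" "a' \<in> carrier R" "b' \<in> carrier R" "b' \<notin> I"
    "frac R I a' b' = frac R I a b" using frac_rep assms by metis
  obtain c' d' where r2: "frac_rep (frac R I c d) = (c',d')" "c' \<in> carrier R" "d' \<in> carrier R" "d' \<notin> I"
    "frac R I c' d' = frac R I c d" using frac_rep assms by metis
  have u: "a' \<otimes> b \<ominus> a \<otimes> b' \<in> I" using r1 assms frac_eq_iff by blast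
  have v: "c' \<otimes> d \<ominus> c \<otimes> d' \<in> I" using r2 assms frac_eq_iff by blast
  have "(a' \<otimes> c') \<otimes> (b \<otimes> d) \<ominus> (a \<otimes> c) \<otimes> (b' \<otimes> d')
     = (c' \<otimes> d) \<otimes> (a' \<otimes> b \<ominus> a \<otimes> b') \<oplus> (a \<otimes> b') \<otimes> (c' \<otimes> d \<ominus> c \<otimes> d')"
    using assms r1 r2 by algebra
  also have "\<dots> \<in> I" using comb2[OF u v] assms r1 r2 by simp
  finally show ?thesis unfolding frac_mul_def r1(1) r2(1) using assms r1 r2
    by (simp add: frac_eq_iff)
qed

lemma frac_eqI':
  assumes "a \<otimes> d = c \<otimes> b" "a \<in> carrier R" "b \<in> carrier R" "c \<in> carrier R" "d \<in> carrier R" "b \<notin> I" "d \<notin> I"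
  shows "frac R I a b = frac R I c d"
  using frac_eqI assms by blast

lemma fcI: "a \<in> carrier R \<Longrightarrow> b \<in> carrier R \<Longrightarrow> b \<notin> I \<Longrightarrow> frac R I a b \<in> frac_field_carrier R I"
  unfolding frac_field_carrier_def by blast

lemma frac_cases:
  assumes "x \<in> frac_field_carrier R I"
  obtains a b where "a \<in> carrier R" "b \<in> carrier R" "b \<notin> I" "x = frac R I a b"
  using assms unfolding frac_field_carrier_def by blast

lemma Kf_cring: "cring (Kf R I)"
proof (rule cringI)
  show "abelian_group (Kf R I)"
  proof (rule abelian_groupI)
    fix x y assume "x \<in> carrier (Kf R I)" "y \<in> carrier (Kf R I)"
    then obtain a b c d where c: "a \<in> carrier R" "b \<in> carrier R" "b \<notin> I" "x = frac R I a b"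
      "c \<in> carrier R" "d \<in> carrier R" "d \<notin> I" "y = frac R I c d"
      unfolding Kf_def by (auto elim!: frac_cases)
    show "x \<oplus>\<^bsub>Kf R I\<^esub> y \<in> carrier (Kf R I)"
      using c by (simp add: Kf_def frac_add_eq fcI)
    show "x \<oplus>\<^bsub>Kf R I\<^esub> y = y \<oplus>\<^bsub>Kf R I\<^esub> x"
      using c apply (simp add: Kf_def frac_add_eq)
      apply (rule frac_eqI')
      using c apply algebra
      using c apply simp_all
      done
  next
    show "\<zero>\<^bsub>Kf R I\<^esub> \<in> carrier (Kf R I)" by (simp add: Kf_def fcI)
  next
    fix x y z assume "x \<in> carrier (Kf R I)" "y \<in> carrier (Kf R I)" "z \<in> carrier (Kf R I)"
    then obtain a b c d e f where c: "a \<in> carrier R" "b \<in> carrier R" "b \<notin> I" "x = frac R I a b"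
      "c \<in> carrier R" "d \<in> carrier R" "d \<notin> I" "y = frac R I c d"
      "e \<in> carrier R" "f \<in> carrier R" "f \<notin> I" "z = frac R I e f"
      unfolding Kf_def by (auto elim!: frac_cases)
    show "x \<oplus>\<^bsub>Kf R I\<^esub> y \<oplus>\<^bsub>Kf R I\<^esub> z = x \<oplus>\<^bsub>Kf R I\<^esub> (y \<oplus>\<^bsub>Kf R I\<^esub> z)"
      using c apply (simp add: Kf_def frac_add_eq)
      apply (rule frac_eqI')
      using c apply algebra
      using c apply simp_all
      done
  next
    fix x assume "x \<in> carrier (Kf R I)"
    then obtain a b where c: "a \<in> carrier R" "b \<in> carrier R" "b \<notin> I" "x = frac R I a b"
      unfolding Kf_def by (auto elim!: frac_cases)
    show "\<zero>\<^bsub>Kf R I\<^esub> \<oplus>\<^bsub>Kf R I\<^esub> x = x"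
      using c by (simp add: Kf_def frac_add_eq)
    have "frac R I (\<ominus> a) b \<oplus>\<^bsub>Kf R I\<^esub> x = \<zero>\<^bsub>Kf R I\<^esub>"
      using c apply (simp add: Kf_def frac_add_eq)
      apply (rule frac_eqI')
      using c apply algebra
      using c apply simp_all
      done
    moreover have "frac R I (\<ominus> a) b \<in> carrier (Kf R I)" using c by (simp add: Kf_def fcI)
    ultimately show "\<exists>y\<in>carrier (Kf R I). y \<oplus>\<^bsub>Kf R I\<^esub> x = \<zero>\<^bsub>Kf R I\<^esub>" by blast
  qed
next
  show "comm_monoid (Kf R I)"
  proof (rule comm_monoidI)
    fix x y assume "x \<in> carrier (Kf R I)" "y \<in> carrier (Kf R I)"
    then obtain a b c d where c: "a \<in> carrier R" "b \<in> carrier R" "b \<notin> I" "x = frac R I a b"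
      "c \<in> carrier R" "d \<in> carrier R" "d \<notin> I" "y = frac R I c d"
      unfolding Kf_def by (auto elim!: frac_cases)
    show "x \<otimes>\<^bsub>Kf R I\<^esub> y \<in> carrier (Kf R I)"
      using c by (simp add: Kf_def frac_mul_eq fcI)
    show "x \<otimes>\<^bsub>Kf R I\<^esub> y = y \<otimes>\<^bsub>Kf R I\<^esub> x"
      using c apply (simp add: Kf_def frac_mul_eq)
      apply (rule frac_eqI')
      using c apply algebra
      using c apply simp_all
      done
  next
    show "\<one>\<^bsub>Kf R I\<^esub> \<in> carrier (Kf R I)" by (simp add: Kf_def fcI)
  next
    fix x y z assume "x \<in> carrier (Kf R I)" "y \<in> carrier (Kf R I)" "z \<in> carrier (Kf R I)"
    then obtain a b c d e f where c: "a \<in> carrier R" "b \<in> carrier R" "b \<notin> I" "x = frac R I a b"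
      "c \<in> carrier R" "d \<in> carrier R" "d \<notin> I" "y = frac R I c d"
      "e \<in> carrier R" "f \<in> carrier R" "f \<notin> I" "z = frac R I e f"
      unfolding Kf_def by (auto elim!: frac_cases)
    show "x \<otimes>\<^bsub>Kf R I\<^esub> y \<otimes>\<^bsub>Kf R I\<^esub> z = x \<otimes>\<^bsub>Kf R I\<^esub> (y \<otimes>\<^bsub>Kf R I\<^esub> z)"
      using c apply (simp add: Kf_def frac_mul_eq)
      apply (rule frac_eqI')
      using c apply algebra
      using c apply simp_all
      done
  next
    fix x assume "x \<in> carrier (Kf R I)"
    then obtain a b where c: "a \<in> carrier R" "b \<in> carrier R" "b \<notin> I" "x = frac R I a b"
      unfolding Kf_def by (auto elim!: frac_cases)
    show "\<one>\<^bsub>Kf R I\<^esub> \<otimes>\<^bsub>Kf R I\<^esub> x = x"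
      using c by (simp add: Kf_def frac_mul_eq)
  qed
next
  fix x y z assume "x \<in> carrier (Kf R I)" "y \<in> carrier (Kf R I)" "z \<in> carrier (Kf R I)"
  then obtain a b c d e f where c: "a \<in> carrier R" "b \<in> carrier R" "b \<notin> I" "x = frac R I a b"
    "c \<in> carrier R" "d \<in> carrier R" "d \<notin> I" "y = frac R I c d"
    "e \<in> carrier R" "f \<in> carrier R" "f \<notin> I" "z = frac R I e f"
    unfolding Kf_def by (auto elim!: frac_cases)
  show "(x \<oplus>\<^bsub>Kf R I\<^esub> y) \<otimes>\<^bsub>Kf R I\<^esub> z = x \<otimes>\<^bsub>Kf R I\<^esub> z \<oplus>\<^bsub>Kf R I\<^esub> y \<otimes>\<^bsub>Kf R I\<^esub> z"
    using c apply (simp add: Kf_def frac_mul_eq frac_add_eq)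
    apply (rule frac_eqI')
    using c apply algebra
    using c apply simp_all
    done
qed

lemma Kf_domain: "domain (Kf R I)"
proof (rule domainI[OF Kf_cring])
  show "\<one>\<^bsub>Kf R I\<^esub> \<noteq> \<zero>\<^bsub>Kf R I\<^esub>"
    by (simp add: Kf_def frac_zero_iff)
  fix x y assume xy: "x \<otimes>\<^bsub>Kf R I\<^esub> y = \<zero>\<^bsub>Kf R I\<^esub>" "x \<in> carrier (Kf R I)" "y \<in> carrier (Kf R I)"
  then obtain a b c d where c: "a \<in> carrier R" "b \<in> carrier R" "b \<notin> I" "x = frac R I a b"
    "c \<in> carrier R" "d \<in> carrier R" "d \<notin> I" "y = frac R I c d"
    unfolding Kf_def by (auto elim!: frac_cases)
  from xy(1) have "a \<otimes> c \<in> I" using c by (simp add: Kf_def frac_mul_eq frac_zero_iff)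
  thus "x = \<zero>\<^bsub>Kf R I\<^esub> \<or> y = \<zero>\<^bsub>Kf R I\<^esub>"
    using c I_prime by (simp add: Kf_def frac_zero_iff)
qed

end

context cring begin

lemma der_carrier: "is_derivation R d \<Longrightarrow> x \<in> carrier R \<Longrightarrow> d x \<in> carrier R"
  unfolding is_derivation_def by blast

lemma der_add: "is_derivation R d \<Longrightarrow> x \<in> carrier R \<Longrightarrow> y \<in> carrier R \<Longrightarrow> d (x \<oplus> y) = d x \<oplus> d y"
  unfolding is_derivation_def by blast

lemma der_mult: "is_derivation R d \<Longrightarrow> x \<in> carrier R \<Longrightarrow> y \<in> carrier R \<Longrightarrow> d (x \<otimes> y) = d x \<otimes> y \<oplus> x \<otimes> d y"
  unfolding is_derivation_def by blast

lemma der_zero: assumes "is_derivation R d" shows "d \<zero> = \<zero>"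
proof -
  have c: "d \<zero> \<in> carrier R" using der_carrier[OF assms] by simp
  have "d \<zero> \<oplus> d \<zero> = d \<zero> \<oplus> \<zero>" using der_add[OF assms, of \<zero> \<zero>] c by simp
  thus ?thesis using c by simp
qed

lemma der_one: assumes "is_derivation R d" shows "d \<one> = \<zero>"
proof -
  have c: "d \<one> \<in> carrier R" using der_carrier[OF assms] by simp
  have "d \<one> \<oplus> d \<one> = d \<one> \<oplus> \<zero>" using der_mult[OF assms, of \<one> \<one>] c by simp
  thus ?thesis using c by simp
qed

lemma der_neg: assumes "is_derivation R d" "x \<in> carrier R" shows "d (\<ominus> x) = \<ominus> d x"
proof -
  have c: "d x \<in> carrier R" "d (\<ominus> x) \<in> carrier R" using der_carrier[OF assms(1)] assms(2) by simp_all
  have "d (\<ominus> x) \<oplus> d x = \<zero>" using der_add[OF assms(1), of "\<ominus> x" x] assms der_zero[OF assms(1)] by (simp add: l_neg)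
  thus ?thesis using add.inv_equality[OF _ c] by simp
qed

lemma der_minus: assumes "is_derivation R d" "x \<in> carrier R" "y \<in> carrier R" shows "d (x \<ominus> y) = d x \<ominus> d y"
  using assms der_add der_neg by (simp add: minus_eq)

end

context primeideal begin

lemma frac_der_zero:
  assumes der: "is_derivation R d" and dI: "\<forall>x\<in>I. d x \<in> I"
  shows "frac_der R I d (frac R I \<zero> \<one>) = frac R I \<zero> \<one>"
proof -
  obtain a' b' where r: "frac_rep (frac R I \<zero> \<one>) = (a',b')" "a' \<in> carrier R" "b' \<in> carrier R" "b' \<notin> I"
    "frac R I a' b' = frac R I \<zero> \<one>" using frac_rep[of \<zero> \<one>] by auto
  have a: "a' \<in> I" using r frac_zero_iff by blast
  have "d a' \<otimes> b' \<ominus> a' \<otimes> d b' \<in> I"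
    using a dI r der_carrier[OF der] I_r_closed by (simp add: minus_eq a_inv_closed additive_subgroup.a_closed[OF additive_subgroup_axioms])
  thus ?thesis unfolding frac_der_def r(1) using r der_carrier[OF der] by (simp add: frac_zero_iff)
qed

lemma frac_der_iota:
  assumes der: "is_derivation R d" and dI: "\<forall>x\<in>I. d x \<in> I" and a: "a \<in> carrier R"
  shows "frac_der R I d (frac R I a \<one>) = frac R I (d a) \<one>"
proof -
  obtain a' b' where r: "frac_rep (frac R I a \<one>) = (a',b')" "a' \<in> carrier R" "b' \<in> carrier R" "b' \<notin> I"
    "frac R I a' b' = frac R I a \<one>" using frac_rep[of a \<one>] a by auto
  have u: "a' \<otimes> \<one> \<ominus> a \<otimes> b' \<in> I" using r a frac_eq_iff by simp
  have du: "d (a' \<otimes> \<one> \<ominus> a \<otimes> b') \<in> I" using u dI by blast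
  have c: "d a \<in> carrier R" "d a' \<in> carrier R" "d b' \<in> carrier R" using der_carrier[OF der] a r by auto
  have e: "d (a' \<otimes> \<one> \<ominus> a \<otimes> b') = d a' \<ominus> d a \<otimes> b' \<ominus> a \<otimes> d b'"
  proof -
    have "d (a' \<otimes> \<one> \<ominus> a \<otimes> b') = d (a' \<otimes> \<one>) \<ominus> d (a \<otimes> b')"
      using der_minus[OF der] a r by simp
    also have "\<dots> = d a' \<ominus> (d a \<otimes> b' \<oplus> a \<otimes> d b')"
      using der_mult[OF der] der_one[OF der] a r c by simp
    also have "\<dots> = d a' \<ominus> d a \<otimes> b' \<ominus> a \<otimes> d b'"
      using a r c by algebra
    finally show ?thesis .
  qed
  have "(d a' \<otimes> b' \<ominus> a' \<otimes> d b') \<otimes> \<one> \<ominus> d a \<otimes> (b' \<otimes> b')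
      = b' \<otimes> (d a' \<ominus> d a \<otimes> b' \<ominus> a \<otimes> d b') \<oplus> (\<ominus> d b') \<otimes> (a' \<otimes> \<one> \<ominus> a \<otimes> b')"
    using a r c by algebra
  also have "\<dots> \<in> I" using comb2[OF du[unfolded e] u] r c by simp
  finally show ?thesis unfolding frac_der_def r(1) using r c a by (simp add: frac_eq_iff)
qed

end

lemma diff_spec_prime: "P \<in> diff_spec R I \<delta> \<Longrightarrow> primeideal P R"
  unfolding diff_spec_def by blast

lemma diff_spec_der: "P \<in> diff_spec R I \<delta> \<Longrightarrow> i \<in> I \<Longrightarrow> x \<in> P \<Longrightarrow> \<delta> i x \<in> P"
  unfolding diff_spec_def by blast

lemma kolchin_istopology:
  "istopology (\<lambda>U. \<exists>E. E \<subseteq> carrier R \<and> U = diff_spec R I \<delta> - kolchin_V R I \<delta> E)"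
  unfolding istopology_def
proof (intro conjI allI impI)
  fix S T
  assume S: "\<exists>E. E \<subseteq> carrier R \<and> S = diff_spec R I \<delta> - kolchin_V R I \<delta> E"
     and T: "\<exists>E. E \<subseteq> carrier R \<and> T = diff_spec R I \<delta> - kolchin_V R I \<delta> E"
  from S obtain E1 where E1: "E1 \<subseteq> carrier R" "S = diff_spec R I \<delta> - kolchin_V R I \<delta> E1" by blast
  from T obtain E2 where E2: "E2 \<subseteq> carrier R" "T = diff_spec R I \<delta> - kolchin_V R I \<delta> E2" by blast
  show "\<exists>E. E \<subseteq> carrier R \<and> S \<inter> T = diff_spec R I \<delta> - kolchin_V R I \<delta> E"
  proof (cases "diff_spec R I \<delta> = {}")
    case True
    then have "S \<inter> T = diff_spec R I \<delta> - kolchin_V R I \<delta> {}" using E1(2) by simp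
    then show ?thesis by blast
  next
    case False
    then obtain P0 where "P0 \<in> diff_spec R I \<delta>" by blast
    then interpret cring R using diff_spec_prime primeideal.axioms(2) by blast
    let ?E = "{x \<otimes>\<^bsub>R\<^esub> y | x y. x \<in> E1 \<and> y \<in> E2}"
    have "?E \<subseteq> carrier R" using E1 E2 by auto
    moreover have "S \<inter> T = diff_spec R I \<delta> - kolchin_V R I \<delta> ?E"
    proof -
      have "?E \<subseteq> P \<longleftrightarrow> E1 \<subseteq> P \<or> E2 \<subseteq> P" if P: "P \<in> diff_spec R I \<delta>" for P
      proof -
        interpret primeideal P R using diff_spec_prime P by blast
        show ?thesis
        proof
          assume a: "?E \<subseteq> P"
          show "E1 \<subseteq> P \<or> E2 \<subseteq> P"
          proof (rule ccontr)
            assume "\<not> (E1 \<subseteq> P \<or> E2 \<subseteq> P)"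
            then obtain x y where "x \<in> E1" "x \<notin> P" "y \<in> E2" "y \<notin> P" by blast
            moreover have "x \<otimes>\<^bsub>R\<^esub> y \<in> P" using a calculation by blast
            moreover have "x \<in> carrier R" "y \<in> carrier R" using calculation E1 E2 by auto
            ultimately show False using prod_notin[of x y] by simp
          qed
        next
          assume "E1 \<subseteq> P \<or> E2 \<subseteq> P"
          show "?E \<subseteq> P"
          proof
            fix z assume "z \<in> ?E"
            then obtain x y where z: "z = x \<otimes>\<^bsub>R\<^esub> y" "x \<in> E1" "y \<in> E2" by blast
            have c: "x \<in> carrier R" "y \<in> carrier R" using z E1 E2 by auto
            show "z \<in> P"
            proof (cases "E1 \<subseteq> P")
              case True thus ?thesis using z c I_r_closed by blast
            next
              case False thus ?thesis using z c I_l_closed \<open>E1 \<subseteq> P \<or> E2 \<subseteq> P\<close> by blast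
            qed
          qed
        qed
      qed
      thus ?thesis unfolding E1(2) E2(2) kolchin_V_def by blast
    qed
    ultimately show ?thesis by blast
  qed
next
  fix K
  assume K: "\<forall>U\<in>K. \<exists>E. E \<subseteq> carrier R \<and> U = diff_spec R I \<delta> - kolchin_V R I \<delta> E"
  define F where "F U = (SOME E. E \<subseteq> carrier R \<and> U = diff_spec R I \<delta> - kolchin_V R I \<delta> E)" for U
  have F: "F U \<subseteq> carrier R \<and> U = diff_spec R I \<delta> - kolchin_V R I \<delta> (F U)" if "U \<in> K" for U
  proof -
    have "\<exists>E. E \<subseteq> carrier R \<and> U = diff_spec R I \<delta> - kolchin_V R I \<delta> E" using K that by blast
    then show ?thesis unfolding F_def by (rule someI_ex)
  qed
  have "\<Union>K = diff_spec R I \<delta> - kolchin_V R I \<delta> (\<Union>(F ` K))"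
  proof
    show "\<Union> K \<subseteq> diff_spec R I \<delta> - kolchin_V R I \<delta> (\<Union> (F ` K))"
    proof
      fix P assume "P \<in> \<Union> K"
      then obtain U where U: "U \<in> K" "P \<in> U" by blast
      hence "P \<in> diff_spec R I \<delta>" "\<not> F U \<subseteq> P" using F[OF U(1)] unfolding kolchin_V_def by auto
      thus "P \<in> diff_spec R I \<delta> - kolchin_V R I \<delta> (\<Union> (F ` K))" using U unfolding kolchin_V_def by auto
    qed
    show "diff_spec R I \<delta> - kolchin_V R I \<delta> (\<Union> (F ` K)) \<subseteq> \<Union> K"
    proof
      fix P assume "P \<in> diff_spec R I \<delta> - kolchin_V R I \<delta> (\<Union> (F ` K))"
      then obtain U where "U \<in> K" "P \<in> diff_spec R I \<delta>" "\<not> F U \<subseteq> P" unfolding kolchin_V_def by blast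
      thus "P \<in> \<Union> K" using F[of U] unfolding kolchin_V_def by blast
    qed
  qed
  moreover have "\<Union>(F ` K) \<subseteq> carrier R" using F by blast
  ultimately show "\<exists>E. E \<subseteq> carrier R \<and> \<Union> K = diff_spec R I \<delta> - kolchin_V R I \<delta> E" by blast
qed

lemma openin_kolchin:
  "openin (kolchin_topology R I \<delta>) U \<longleftrightarrow> (\<exists>E. E \<subseteq> carrier R \<and> U = diff_spec R I \<delta> - kolchin_V R I \<delta> E)"
  by (simp only: kolchin_topology_def topology_inverse'[OF kolchin_istopology])

lemma basic_open:
  assumes "e \<in> carrier R"
  shows "openin (kolchin_topology R I \<delta>) {P \<in> diff_spec R I \<delta>. e \<notin> P}"
  unfolding openin_kolchin kolchin_V_def using assms by (intro exI[of _ "{e}"]) auto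

lemma topspace_kolchin: "topspace (kolchin_topology R I \<delta>) = diff_spec R I \<delta>"
proof
  show "topspace (kolchin_topology R I \<delta>) \<subseteq> diff_spec R I \<delta>"
  proof
    fix P assume "P \<in> topspace (kolchin_topology R I \<delta>)"
    then obtain U where "openin (kolchin_topology R I \<delta>) U" "P \<in> U" unfolding topspace_def by blast
    then show "P \<in> diff_spec R I \<delta>" unfolding openin_kolchin by blast
  qed
  show "diff_spec R I \<delta> \<subseteq> topspace (kolchin_topology R I \<delta>)"
  proof
    fix P assume P: "P \<in> diff_spec R I \<delta>"
    then interpret primeideal P R using diff_spec_prime by blast
    have "P \<in> {P \<in> diff_spec R I \<delta>. \<one>\<^bsub>R\<^esub> \<notin> P}" using P by simp
    thus "P \<in> topspace (kolchin_topology R I \<delta>)"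
      using basic_open[of "\<one>\<^bsub>R\<^esub>" R I \<delta>] openin_subset by blast
  qed
qed

lemma open_basic_nbhd:
  assumes "openin (kolchin_topology R I \<delta>) W" "P \<in> W"
  obtains e where "e \<in> carrier R" "e \<notin> P" "{Q \<in> diff_spec R I \<delta>. e \<notin> Q} \<subseteq> W"
proof -
  obtain E where E: "E \<subseteq> carrier R" "W = diff_spec R I \<delta> - kolchin_V R I \<delta> E"
    using assms(1) unfolding openin_kolchin by blast
  have "P \<notin> kolchin_V R I \<delta> E" "P \<in> diff_spec R I \<delta>" using assms(2) E(2) by auto
  hence "\<not> E \<subseteq> P" unfolding kolchin_V_def by auto
  then obtain e where e: "e \<in> E" "e \<notin> P" by blast
  have "e \<in> carrier R" using E e by blast
  moreover have "{Q \<in> diff_spec R I \<delta>. e \<notin> Q} \<subseteq> W" unfolding E(2) kolchin_V_def using e by blast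
  ultimately show ?thesis using e(2) that[of e] by blast
qed

lemma Kf_simps:
  "carrier (Kf R P) = frac_field_carrier R P"
  "x \<oplus>\<^bsub>Kf R P\<^esub> y = frac_add R P x y"
  "x \<otimes>\<^bsub>Kf R P\<^esub> y = frac_mul R P x y"
  "\<one>\<^bsub>Kf R P\<^esub> = frac R P \<one>\<^bsub>R\<^esub> \<one>\<^bsub>R\<^esub>"
  "\<zero>\<^bsub>Kf R P\<^esub> = frac R P \<zero>\<^bsub>R\<^esub> \<one>\<^bsub>R\<^esub>"
  by (simp_all add: Kf_def)

context primeideal begin

lemma K_laws:
  assumes "x \<in> frac_field_carrier R I" "y \<in> frac_field_carrier R I" "z \<in> frac_field_carrier R I"
  shows "frac_add R I x y \<in> frac_field_carrier R I"
    "frac_mul R I x y \<in> frac_field_carrier R I"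
    "frac_add R I (frac_add R I x y) z = frac_add R I x (frac_add R I y z)"
    "frac_add R I x y = frac_add R I y x"
    "frac_add R I (frac R I \<zero> \<one>) x = x"
    "frac_mul R I (frac_mul R I x y) z = frac_mul R I x (frac_mul R I y z)"
    "frac_mul R I x y = frac_mul R I y x"
    "frac_mul R I (frac R I \<one> \<one>) x = x"
    "frac_mul R I (frac_add R I x y) z = frac_add R I (frac_mul R I x z) (frac_mul R I y z)"
proof -
  interpret K: cring "Kf R I" by (rule Kf_cring)
  note a = assms[folded Kf_simps(1)]
  show "frac_add R I x y \<in> frac_field_carrier R I"
    using K.a_closed[OF a(1,2)] by (simp add: Kf_simps)
  show "frac_mul R I x y \<in> frac_field_carrier R I"
    using K.m_closed[OF a(1,2)] by (simp add: Kf_simps)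
  show "frac_add R I (frac_add R I x y) z = frac_add R I x (frac_add R I y z)"
    using K.a_assoc[OF a] by (simp add: Kf_simps)
  show "frac_add R I x y = frac_add R I y x"
    using K.a_comm[OF a(1,2)] by (simp add: Kf_simps)
  show "frac_add R I (frac R I \<zero> \<one>) x = x"
    using K.l_zero[OF a(1)] by (simp add: Kf_simps)
  show "frac_mul R I (frac_mul R I x y) z = frac_mul R I x (frac_mul R I y z)"
    using K.m_assoc[OF a] by (simp add: Kf_simps)
  show "frac_mul R I x y = frac_mul R I y x"
    using K.m_comm[OF a(1,2)] by (simp add: Kf_simps)
  show "frac_mul R I (frac R I \<one> \<one>) x = x"
    using K.l_one[OF a(1)] by (simp add: Kf_simps)
  show "frac_mul R I (frac_add R I x y) z = frac_add R I (frac_mul R I x z) (frac_mul R I y z)"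
    using K.l_distr[OF a] by (simp add: Kf_simps)
qed

lemma K_neg:
  assumes "x \<in> frac_field_carrier R I"
  shows "frac_add R I (frac_mul R I (frac R I (\<ominus> \<one>) \<one>) x) x = frac R I \<zero> \<one>"
proof -
  obtain a b where c: "a \<in> carrier R" "b \<in> carrier R" "b \<notin> I" "x = frac R I a b"
    using assms frac_cases by blast
  show ?thesis
    using c apply (simp add: frac_mul_eq frac_add_eq)
    apply (rule frac_eqI')
    using c apply algebra
    using c apply simp_all
    done
qed

lemma K_one_closed: "frac R I \<one> \<one> \<in> frac_field_carrier R I" and K_zero_closed: "frac R I \<zero> \<one> \<in> frac_field_carrier R I"
  by (simp_all add: fcI)

end


locale dctx =
  fixes A :: "('a, 'm) ring_scheme" and I :: "'i set" and \<delta> :: "'i \<Rightarrow> 'a \<Rightarrow> 'a"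
  assumes dr: "diff_ring A I \<delta>"
begin

abbreviation "XX \<equiv> diff_spec A I \<delta>"
abbreviation "OR \<equiv> O_ring A I \<delta>"
abbreviation "OS \<equiv> O_sections A I \<delta> (diff_spec A I \<delta>)"

lemma cringA: "cring A" using dr unfolding diff_ring_def by blast
lemma derA: "i \<in> I \<Longrightarrow> is_derivation A (\<delta> i)" using dr unfolding diff_ring_def by blast
lemma Xprime: "P \<in> XX \<Longrightarrow> primeideal P A" by (rule diff_spec_prime)
lemma XdI: "P \<in> XX \<Longrightarrow> i \<in> I \<Longrightarrow> \<forall>x\<in>P. \<delta> i x \<in> P" using diff_spec_der by metis

lemma O_carrier: "carrier OR = OS" by (simp add: O_ring_def)
lemma O_add: "f \<oplus>\<^bsub>OR\<^esub> g = (\<lambda>P. if P \<in> XX then frac_add A P (f P) (g P) else undefined)"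
  by (simp add: O_ring_def)
lemma O_mult: "f \<otimes>\<^bsub>OR\<^esub> g = (\<lambda>P. if P \<in> XX then frac_mul A P (f P) (g P) else undefined)"
  by (simp add: O_ring_def)
lemma O_one: "\<one>\<^bsub>OR\<^esub> = (\<lambda>P. if P \<in> XX then frac A P \<one>\<^bsub>A\<^esub> \<one>\<^bsub>A\<^esub> else undefined)"
  by (simp add: O_ring_def)
lemma O_zero: "\<zero>\<^bsub>OR\<^esub> = (\<lambda>P. if P \<in> XX then frac A P \<zero>\<^bsub>A\<^esub> \<one>\<^bsub>A\<^esub> else undefined)"
  by (simp add: O_ring_def)

lemma Osec_val: "f \<in> OS \<Longrightarrow> P \<in> XX \<Longrightarrow> f P \<in> frac_field_carrier A P"
  unfolding O_sections_def by blast
lemma Osec_out: "f \<in> OS \<Longrightarrow> P \<notin> XX \<Longrightarrow> f P = undefined"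
  unfolding O_sections_def by blast
lemma Osec_reg: "f \<in> OS \<Longrightarrow> P \<in> XX \<Longrightarrow> regular_at A I \<delta> XX f P"
  unfolding O_sections_def by blast

lemma reg_add:
  assumes f: "f \<in> OS" and g: "g \<in> OS" and P: "P \<in> XX"
  shows "regular_at A I \<delta> XX (f \<oplus>\<^bsub>OR\<^esub> g) P"
proof -
  obtain W1 a b where W1: "openin (kolchin_topology A I \<delta>) W1" "P \<in> W1" "W1 \<subseteq> XX"
    "a \<in> carrier A" "b \<in> carrier A" "\<forall>Q\<in>W1. b \<notin> Q \<and> f Q = frac A Q a b"
    using Osec_reg[OF f P] unfolding regular_at_def by blast
  obtain W2 c d where W2: "openin (kolchin_topology A I \<delta>) W2" "P \<in> W2" "W2 \<subseteq> XX"
    "c \<in> carrier A" "d \<in> carrier A" "\<forall>Q\<in>W2. d \<notin> Q \<and> g Q = frac A Q c d"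
    using Osec_reg[OF g P] unfolding regular_at_def by blast
  interpret cring A by (rule cringA)
  have "\<forall>Q\<in>W1 \<inter> W2. b \<otimes>\<^bsub>A\<^esub> d \<notin> Q \<and> (f \<oplus>\<^bsub>OR\<^esub> g) Q = frac A Q (a \<otimes>\<^bsub>A\<^esub> d \<oplus>\<^bsub>A\<^esub> c \<otimes>\<^bsub>A\<^esub> b) (b \<otimes>\<^bsub>A\<^esub> d)"
  proof
    fix Q assume Q: "Q \<in> W1 \<inter> W2"
    hence QX: "Q \<in> XX" using W1 by blast
    interpret Qp: primeideal Q A by (rule Xprime[OF QX])
    show "b \<otimes>\<^bsub>A\<^esub> d \<notin> Q \<and> (f \<oplus>\<^bsub>OR\<^esub> g) Q = frac A Q (a \<otimes>\<^bsub>A\<^esub> d \<oplus>\<^bsub>A\<^esub> c \<otimes>\<^bsub>A\<^esub> b) (b \<otimes>\<^bsub>A\<^esub> d)"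
      using Q QX W1 W2 Qp.frac_add_eq[of a b c d] by (simp add: O_add)
  qed
  moreover have "a \<otimes>\<^bsub>A\<^esub> d \<oplus>\<^bsub>A\<^esub> c \<otimes>\<^bsub>A\<^esub> b \<in> carrier A" "b \<otimes>\<^bsub>A\<^esub> d \<in> carrier A"
    using W1 W2 by auto
  moreover have "openin (kolchin_topology A I \<delta>) (W1 \<inter> W2)" using W1 W2 by blast
  moreover have "P \<in> W1 \<inter> W2" "W1 \<inter> W2 \<subseteq> XX" using W1 W2 by auto
  ultimately show ?thesis unfolding regular_at_def by blast
qed

lemma reg_mult:
  assumes f: "f \<in> OS" and g: "g \<in> OS" and P: "P \<in> XX"
  shows "regular_at A I \<delta> XX (f \<otimes>\<^bsub>OR\<^esub> g) P"
proof -
  obtain W1 a b where W1: "openin (kolchin_topology A I \<delta>) W1" "P \<in> W1" "W1 \<subseteq> XX"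
    "a \<in> carrier A" "b \<in> carrier A" "\<forall>Q\<in>W1. b \<notin> Q \<and> f Q = frac A Q a b"
    using Osec_reg[OF f P] unfolding regular_at_def by blast
  obtain W2 c d where W2: "openin (kolchin_topology A I \<delta>) W2" "P \<in> W2" "W2 \<subseteq> XX"
    "c \<in> carrier A" "d \<in> carrier A" "\<forall>Q\<in>W2. d \<notin> Q \<and> g Q = frac A Q c d"
    using Osec_reg[OF g P] unfolding regular_at_def by blast
  interpret cring A by (rule cringA)
  have "\<forall>Q\<in>W1 \<inter> W2. b \<otimes>\<^bsub>A\<^esub> d \<notin> Q \<and> (f \<otimes>\<^bsub>OR\<^esub> g) Q = frac A Q (a \<otimes>\<^bsub>A\<^esub> c) (b \<otimes>\<^bsub>A\<^esub> d)"
  proof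
    fix Q assume Q: "Q \<in> W1 \<inter> W2"
    hence QX: "Q \<in> XX" using W1 by blast
    interpret Qp: primeideal Q A by (rule Xprime[OF QX])
    show "b \<otimes>\<^bsub>A\<^esub> d \<notin> Q \<and> (f \<otimes>\<^bsub>OR\<^esub> g) Q = frac A Q (a \<otimes>\<^bsub>A\<^esub> c) (b \<otimes>\<^bsub>A\<^esub> d)"
      using Q QX W1 W2 Qp.frac_mul_eq[of a b c d] by (simp add: O_mult)
  qed
  moreover have "a \<otimes>\<^bsub>A\<^esub> c \<in> carrier A" "b \<otimes>\<^bsub>A\<^esub> d \<in> carrier A"
    using W1 W2 by auto
  moreover have "openin (kolchin_topology A I \<delta>) (W1 \<inter> W2)" using W1 W2 by blast
  moreover have "P \<in> W1 \<inter> W2" "W1 \<inter> W2 \<subseteq> XX" using W1 W2 by auto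
  ultimately show ?thesis unfolding regular_at_def by blast
qed

lemma const_sec:
  assumes a: "a \<in> carrier A"
  shows "(\<lambda>P. if P \<in> XX then frac A P a \<one>\<^bsub>A\<^esub> else undefined) \<in> OS"
proof -
  interpret cring A by (rule cringA)
  have op: "openin (kolchin_topology A I \<delta>) XX"
    using openin_topspace[of "kolchin_topology A I \<delta>"] by (simp add: topspace_kolchin)
  show ?thesis unfolding O_sections_def
  proof (intro CollectI conjI ballI allI impI)
    fix P assume P: "P \<in> XX"
    interpret Pp: primeideal P A by (rule Xprime[OF P])
    show "(if P \<in> XX then frac A P a \<one>\<^bsub>A\<^esub> else undefined) \<in> frac_field_carrier A P"
      using P a by (simp add: Pp.fcI)
    have hq: "\<forall>Q\<in>XX. \<one>\<^bsub>A\<^esub> \<notin> Q \<and> (\<lambda>P. if P \<in> XX then frac A P a \<one>\<^bsub>A\<^esub> else undefined) Q = frac A Q a \<one>\<^bsub>A\<^esub>"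
      using primeideal.one_notin[OF Xprime] by simp
    show "regular_at A I \<delta> XX (\<lambda>P. if P \<in> XX then frac A P a \<one>\<^bsub>A\<^esub> else undefined) P"
      unfolding regular_at_def
      apply (rule exI[of _ XX], rule exI[of _ a], rule exI[of _ "\<one>\<^bsub>A\<^esub>"])
      using op P a hq one_closed by blast
  qed simp
qed

lemma iota_sec: "a \<in> carrier A \<Longrightarrow> iota' A I \<delta> a \<in> OS"
  unfolding iota'_def by (rule const_sec)

lemma O_ext: "(\<And>P. P \<in> XX \<Longrightarrow> u P = v P) \<Longrightarrow> (\<And>P. P \<notin> XX \<Longrightarrow> u P = v P) \<Longrightarrow> u = v"
  by (rule ext) metis

lemma OS_I:
  assumes "\<And>P. P \<in> XX \<Longrightarrow> h P \<in> frac_field_carrier A P"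
    "\<And>P. P \<in> XX \<Longrightarrow> regular_at A I \<delta> XX h P" "\<And>P. P \<notin> XX \<Longrightarrow> h P = undefined"
  shows "h \<in> OS"
  unfolding O_sections_def using assms by simp

lemma O_add_closed: assumes f: "f \<in> OS" and g: "g \<in> OS" shows "f \<oplus>\<^bsub>OR\<^esub> g \<in> OS"
proof (rule OS_I)
  fix P assume P: "P \<in> XX"
  show "(f \<oplus>\<^bsub>OR\<^esub> g) P \<in> frac_field_carrier A P"
    using primeideal.K_laws(1)[OF Xprime[OF P] Osec_val[OF f P] Osec_val[OF g P] Osec_val[OF g P]] P by (simp add: O_add)
  show "regular_at A I \<delta> XX (f \<oplus>\<^bsub>OR\<^esub> g) P" by (rule reg_add[OF f g P])
qed (simp add: O_add)

lemma O_mult_closed: assumes f: "f \<in> OS" and g: "g \<in> OS" shows "f \<otimes>\<^bsub>OR\<^esub> g \<in> OS"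
proof (rule OS_I)
  fix P assume P: "P \<in> XX"
  show "(f \<otimes>\<^bsub>OR\<^esub> g) P \<in> frac_field_carrier A P"
    using primeideal.K_laws(2)[OF Xprime[OF P] Osec_val[OF f P] Osec_val[OF g P] Osec_val[OF g P]] P by (simp add: O_mult)
  show "regular_at A I \<delta> XX (f \<otimes>\<^bsub>OR\<^esub> g) P" by (rule reg_mult[OF f g P])
qed (simp add: O_mult)

lemma O_zero_closed: "\<zero>\<^bsub>OR\<^esub> \<in> OS"
proof -
  interpret cring A by (rule cringA)
  show ?thesis unfolding O_zero using const_sec[of "\<zero>\<^bsub>A\<^esub>"] by simp
qed

lemma O_one_closed: "\<one>\<^bsub>OR\<^esub> \<in> OS"
proof -
  interpret cring A by (rule cringA)
  show ?thesis unfolding O_one using const_sec[of "\<one>\<^bsub>A\<^esub>"] by simp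
qed

lemma O_cring: "cring OR"
proof (rule cringI)
  show "abelian_group OR"
  proof (rule abelian_groupI, unfold O_carrier)
    fix f g assume f: "f \<in> OS" and g: "g \<in> OS"
    show "f \<oplus>\<^bsub>OR\<^esub> g \<in> OS" by (rule O_add_closed[OF f g])
    show "f \<oplus>\<^bsub>OR\<^esub> g = g \<oplus>\<^bsub>OR\<^esub> f"
    proof (rule O_ext)
      fix P assume P: "P \<in> XX"
      show "(f \<oplus>\<^bsub>OR\<^esub> g) P = (g \<oplus>\<^bsub>OR\<^esub> f) P"
        using primeideal.K_laws(4)[OF Xprime[OF P] Osec_val[OF f P] Osec_val[OF g P] Osec_val[OF g P]] P by (simp add: O_add)
    qed (simp add: O_add)
  next
    show "\<zero>\<^bsub>OR\<^esub> \<in> OS" by (rule O_zero_closed)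
  next
    fix f g h assume f: "f \<in> OS" and g: "g \<in> OS" and h: "h \<in> OS"
    show "f \<oplus>\<^bsub>OR\<^esub> g \<oplus>\<^bsub>OR\<^esub> h = f \<oplus>\<^bsub>OR\<^esub> (g \<oplus>\<^bsub>OR\<^esub> h)"
    proof (rule O_ext)
      fix P assume P: "P \<in> XX"
      show "(f \<oplus>\<^bsub>OR\<^esub> g \<oplus>\<^bsub>OR\<^esub> h) P = (f \<oplus>\<^bsub>OR\<^esub> (g \<oplus>\<^bsub>OR\<^esub> h)) P"
        using primeideal.K_laws(3)[OF Xprime[OF P] Osec_val[OF f P] Osec_val[OF g P] Osec_val[OF h P]] P by (simp add: O_add)
    qed (simp add: O_add)
  next
    fix f assume f: "f \<in> OS"
    show "\<zero>\<^bsub>OR\<^esub> \<oplus>\<^bsub>OR\<^esub> f = f"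
    proof (rule O_ext)
      fix P assume P: "P \<in> XX"
      show "(\<zero>\<^bsub>OR\<^esub> \<oplus>\<^bsub>OR\<^esub> f) P = (f) P"
        using primeideal.K_laws(5)[OF Xprime[OF P] Osec_val[OF f P] Osec_val[OF f P] Osec_val[OF f P]] P by (simp add: O_add O_zero)
    qed (simp add: O_add O_zero Osec_out[OF f])
    let ?n = "iota' A I \<delta> (\<ominus>\<^bsub>A\<^esub> \<one>\<^bsub>A\<^esub>) \<otimes>\<^bsub>OR\<^esub> f"
    have "?n \<in> OS" using O_mult_closed[OF iota_sec f] cring.cring_simprules(3,6)[OF cringA] by simp
    moreover have "?n \<oplus>\<^bsub>OR\<^esub> f = \<zero>\<^bsub>OR\<^esub>"
    proof (rule O_ext)
      fix P assume P: "P \<in> XX"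
      show "(?n \<oplus>\<^bsub>OR\<^esub> f) P = \<zero>\<^bsub>OR\<^esub> P"
        using primeideal.K_neg[OF Xprime[OF P] Osec_val[OF f P]] P by (simp add: O_add O_mult O_zero iota'_def)
    qed (simp add: O_add O_zero)
    ultimately show "\<exists>y\<in>OS. y \<oplus>\<^bsub>OR\<^esub> f = \<zero>\<^bsub>OR\<^esub>" by blast
  qed
next
  show "comm_monoid OR"
  proof (rule comm_monoidI, unfold O_carrier)
    fix f g assume f: "f \<in> OS" and g: "g \<in> OS"
    show "f \<otimes>\<^bsub>OR\<^esub> g \<in> OS" by (rule O_mult_closed[OF f g])
    show "f \<otimes>\<^bsub>OR\<^esub> g = g \<otimes>\<^bsub>OR\<^esub> f"
    proof (rule O_ext)
      fix P assume P: "P \<in> XX"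
      show "(f \<otimes>\<^bsub>OR\<^esub> g) P = (g \<otimes>\<^bsub>OR\<^esub> f) P"
        using primeideal.K_laws(7)[OF Xprime[OF P] Osec_val[OF f P] Osec_val[OF g P] Osec_val[OF g P]] P by (simp add: O_mult)
    qed (simp add: O_mult)
  next
    show "\<one>\<^bsub>OR\<^esub> \<in> OS" by (rule O_one_closed)
  next
    fix f g h assume f: "f \<in> OS" and g: "g \<in> OS" and h: "h \<in> OS"
    show "f \<otimes>\<^bsub>OR\<^esub> g \<otimes>\<^bsub>OR\<^esub> h = f \<otimes>\<^bsub>OR\<^esub> (g \<otimes>\<^bsub>OR\<^esub> h)"
    proof (rule O_ext)
      fix P assume P: "P \<in> XX"
      show "(f \<otimes>\<^bsub>OR\<^esub> g \<otimes>\<^bsub>OR\<^esub> h) P = (f \<otimes>\<^bsub>OR\<^esub> (g \<otimes>\<^bsub>OR\<^esub> h)) P"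
        using primeideal.K_laws(6)[OF Xprime[OF P] Osec_val[OF f P] Osec_val[OF g P] Osec_val[OF h P]] P by (simp add: O_mult)
    qed (simp add: O_mult)
  next
    fix f assume f: "f \<in> OS"
    show "\<one>\<^bsub>OR\<^esub> \<otimes>\<^bsub>OR\<^esub> f = f"
    proof (rule O_ext)
      fix P assume P: "P \<in> XX"
      show "(\<one>\<^bsub>OR\<^esub> \<otimes>\<^bsub>OR\<^esub> f) P = (f) P"
        using primeideal.K_laws(8)[OF Xprime[OF P] Osec_val[OF f P] Osec_val[OF f P] Osec_val[OF f P]] P by (simp add: O_mult O_one)
    qed (simp add: O_mult O_one Osec_out[OF f])
  qed
next
  fix f g h assume "f \<in> carrier OR" "g \<in> carrier OR" "h \<in> carrier OR"
  hence f: "f \<in> OS" and g: "g \<in> OS" and h: "h \<in> OS" by (simp_all add: O_carrier)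
    show "(f \<oplus>\<^bsub>OR\<^esub> g) \<otimes>\<^bsub>OR\<^esub> h = f \<otimes>\<^bsub>OR\<^esub> h \<oplus>\<^bsub>OR\<^esub> g \<otimes>\<^bsub>OR\<^esub> h"
    proof (rule O_ext)
      fix P assume P: "P \<in> XX"
      show "((f \<oplus>\<^bsub>OR\<^esub> g) \<otimes>\<^bsub>OR\<^esub> h) P = (f \<otimes>\<^bsub>OR\<^esub> h \<oplus>\<^bsub>OR\<^esub> g \<otimes>\<^bsub>OR\<^esub> h) P"
        using primeideal.K_laws(9)[OF Xprime[OF P] Osec_val[OF f P] Osec_val[OF g P] Osec_val[OF h P]] P by (simp add: O_mult O_add)
    qed (simp add: O_mult O_add)
qed

end

locale mctx = dctx +
  fixes D :: "('a set \<Rightarrow> ('a \<times> 'a) set) set"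
  assumes sub: "subring D (O_ring A I \<delta>)"
    and dcl: "\<forall>i\<in>I. \<forall>f\<in>D. O_der A I \<delta> i f \<in> D"
    and ioD: "iota' A I \<delta> ` carrier A \<subseteq> D"
begin

abbreviation "DR \<equiv> (O_ring A I \<delta>)\<lparr>carrier := D\<rparr>"
abbreviation "XD \<equiv> diff_spec DR I (O_der A I \<delta>)"
abbreviation "io \<equiv> iota' A I \<delta>"

lemma DsubOS: "D \<subseteq> OS" using subringE(1)[OF sub] by (simp add: O_carrier)

lemma DR_cring: "cring DR"
proof -
  interpret O: cring OR by (rule O_cring)
  have "subcring D OR" by (rule O.subcringI'[OF sub])
  thus ?thesis using O.subcring_iff subringE(1)[OF sub] by blast
qed

lemma io_D: "a \<in> carrier A \<Longrightarrow> io a \<in> D" using ioD by blast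

lemma io_apply: "P \<in> XX \<Longrightarrow> io a P = frac A P a \<one>\<^bsub>A\<^esub>" by (simp add: iota'_def)

lemma io_hom: "io \<in> ring_hom A DR"
proof -
  interpret cring A by (rule cringA)
  show ?thesis
  proof (rule ring_hom_memI)
    fix x assume "x \<in> carrier A" thus "io x \<in> carrier DR" using io_D by simp
  next
    fix x y assume x: "x \<in> carrier A" and y: "y \<in> carrier A"
    show "io (x \<otimes>\<^bsub>A\<^esub> y) = io x \<otimes>\<^bsub>DR\<^esub> io y"
    proof (rule O_ext)
      fix P assume P: "P \<in> XX"
      interpret Pp: primeideal P A by (rule Xprime[OF P])
      show "io (x \<otimes>\<^bsub>A\<^esub> y) P = (io x \<otimes>\<^bsub>DR\<^esub> io y) P"
        using P x y Pp.frac_mul_eq[of x "\<one>\<^bsub>A\<^esub>" y "\<one>\<^bsub>A\<^esub>"] by (simp add: O_mult io_apply)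
    qed (simp add: O_mult iota'_def)
    show "io (x \<oplus>\<^bsub>A\<^esub> y) = io x \<oplus>\<^bsub>DR\<^esub> io y"
    proof (rule O_ext)
      fix P assume P: "P \<in> XX"
      interpret Pp: primeideal P A by (rule Xprime[OF P])
      show "io (x \<oplus>\<^bsub>A\<^esub> y) P = (io x \<oplus>\<^bsub>DR\<^esub> io y) P"
        using P x y Pp.frac_add_eq[of x "\<one>\<^bsub>A\<^esub>" y "\<one>\<^bsub>A\<^esub>"] by (simp add: O_add io_apply)
    qed (simp add: O_add iota'_def)
  next
    show "io \<one>\<^bsub>A\<^esub> = \<one>\<^bsub>DR\<^esub>" by (simp add: O_one iota'_def)
  qed
qed

lemma io_hom_ring: "ring_hom_ring A DR io"
  using ring_hom_ringI2[OF cring.axioms(1)[OF cringA] cring.axioms(1)[OF DR_cring] io_hom] .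

lemma O_der_io: assumes a: "a \<in> carrier A" and i: "i \<in> I" shows "O_der A I \<delta> i (io a) = io (\<delta> i a)"
proof (rule O_ext)
  fix P assume P: "P \<in> XX"
  interpret Pp: primeideal P A by (rule Xprime[OF P])
  show "O_der A I \<delta> i (io a) P = io (\<delta> i a) P"
    using Pp.frac_der_iota[OF derA[OF i] XdI[OF P i] a] P by (simp add: O_der_def io_apply)
qed (simp add: O_der_def iota'_def)


abbreviation "phi Q \<equiv> {a \<in> carrier A. io a \<in> Q}"
abbreviation "psi p \<equiv> {f \<in> D. f p = frac A p \<zero>\<^bsub>A\<^esub> \<one>\<^bsub>A\<^esub>}"

lemma phi_in: assumes Q: "Q \<in> XD" shows "phi Q \<in> XX"
proof -
  have Qp: "primeideal Q DR" by (rule diff_spec_prime[OF Q])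
  have "primeideal (phi Q) A"
    using ring_hom_ring.primeideal_vimage[OF io_hom_ring cringA Qp] .
  moreover have "\<forall>i\<in>I. \<forall>x\<in>phi Q. \<delta> i x \<in> phi Q"
  proof (intro ballI)
    fix i x assume i: "i \<in> I" and x: "x \<in> phi Q"
    have "\<delta> i x \<in> carrier A" using cring.der_carrier[OF cringA derA[OF i]] x by simp
    moreover have "io (\<delta> i x) \<in> Q"
      using diff_spec_der[OF Q i, of "io x"] x O_der_io[OF _ i, of x] by simp
    ultimately show "\<delta> i x \<in> phi Q" by simp
  qed
  ultimately show ?thesis unfolding diff_spec_def by simp
qed

lemma ev_hom: assumes p: "p \<in> XX" shows "ring_hom_ring DR (Kf A p) (\<lambda>f. f p)"
proof -
  interpret pp: primeideal p A by (rule Xprime[OF p])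
  have "(\<lambda>f. f p) \<in> ring_hom DR (Kf A p)"
  proof (rule ring_hom_memI)
    fix f assume "f \<in> carrier DR"
    thus "f p \<in> carrier (Kf A p)" using Osec_val[OF _ p] DsubOS by (auto simp: Kf_simps)
  next
    fix f g assume "f \<in> carrier DR" "g \<in> carrier DR"
    show "(f \<otimes>\<^bsub>DR\<^esub> g) p = f p \<otimes>\<^bsub>Kf A p\<^esub> g p" using p by (simp add: O_mult Kf_simps)
    show "(f \<oplus>\<^bsub>DR\<^esub> g) p = f p \<oplus>\<^bsub>Kf A p\<^esub> g p" using p by (simp add: O_add Kf_simps)
  next
    show "\<one>\<^bsub>DR\<^esub> p = \<one>\<^bsub>Kf A p\<^esub>" using p by (simp add: O_one Kf_simps)
  qed
  thus ?thesis
    using ring_hom_ringI2[OF cring.axioms(1)[OF DR_cring] cring.axioms(1)[OF pp.Kf_cring]] by blast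
qed

lemma psi_in: assumes p: "p \<in> XX" shows "psi p \<in> XD"
proof -
  interpret pp: primeideal p A by (rule Xprime[OF p])
  interpret K: domain "Kf A p" by (rule pp.Kf_domain)
  have ker: "a_kernel DR (Kf A p) (\<lambda>f. f p) = psi p"
    unfolding a_kernel_def' by (simp add: Kf_simps)
  have "primeideal (psi p) DR"
  proof (rule primeidealI)
    show "ideal (psi p) DR" using ring_hom_ring.kernel_is_ideal[OF ev_hom[OF p]] ker by simp
    show "cring DR" by (rule DR_cring)
    have "\<one>\<^bsub>DR\<^esub> \<notin> psi p" using p pp.frac_zero_iff[of "\<one>\<^bsub>A\<^esub>" "\<one>\<^bsub>A\<^esub>"] by (simp add: O_one)
    moreover have "\<one>\<^bsub>DR\<^esub> \<in> carrier DR" using subringE(3)[OF sub] by simp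
    ultimately show "carrier DR \<noteq> psi p" by blast
  next
    fix f g assume f: "f \<in> carrier DR" and g: "g \<in> carrier DR" and fg: "f \<otimes>\<^bsub>DR\<^esub> g \<in> psi p"
    have fc: "f p \<in> carrier (Kf A p)" "g p \<in> carrier (Kf A p)"
      using f g DsubOS Osec_val[OF _ p] by (auto simp: Kf_simps)
    have "f p \<otimes>\<^bsub>Kf A p\<^esub> g p = \<zero>\<^bsub>Kf A p\<^esub>" using fg p by (simp add: O_mult Kf_simps)
    hence "f p = \<zero>\<^bsub>Kf A p\<^esub> \<or> g p = \<zero>\<^bsub>Kf A p\<^esub>" using K.integral fc by blast
    thus "f \<in> psi p \<or> g \<in> psi p" using f g by (auto simp: Kf_simps)
  qed
  moreover have "\<forall>i\<in>I. \<forall>f\<in>psi p. O_der A I \<delta> i f \<in> psi p"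
  proof (intro ballI)
    fix i f assume i: "i \<in> I" and f: "f \<in> psi p"
    have "O_der A I \<delta> i f \<in> D" using dcl i f by blast
    moreover have "O_der A I \<delta> i f p = frac A p \<zero>\<^bsub>A\<^esub> \<one>\<^bsub>A\<^esub>"
      using f p pp.frac_der_zero[OF derA[OF i] XdI[OF p i]] by (simp add: O_der_def)
    ultimately show "O_der A I \<delta> i f \<in> psi p" by simp
  qed
  ultimately show ?thesis unfolding diff_spec_def by simp
qed

lemma phi_psi: assumes p: "p \<in> XX" shows "phi (psi p) = p"
proof -
  interpret pp: primeideal p A by (rule Xprime[OF p])
  show ?thesis
  proof (rule Set.set_eqI)
    fix a show "a \<in> phi (psi p) \<longleftrightarrow> a \<in> p"
    proof (cases "a \<in> carrier A")
      case True
      have "io a \<in> psi p \<longleftrightarrow> a \<in> p"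
        using io_D[OF True] pp.frac_zero_iff[of a "\<one>\<^bsub>A\<^esub>"] True by (simp add: io_apply[OF p])
      thus ?thesis using True by simp
    next
      case False thus ?thesis using pp.Icar by auto
    qed
  qed
qed


lemma reg_nbhd:
  assumes f: "f \<in> OS" and p: "p \<in> XX"
  obtains a b e where "a \<in> carrier A" "b \<in> carrier A" "e \<in> carrier A" "e \<notin> p" "b \<notin> p"
    "\<And>Q. Q \<in> XX \<Longrightarrow> e \<notin> Q \<Longrightarrow> b \<notin> Q \<and> f Q = frac A Q a b"
proof -
  obtain W a b where W: "openin (kolchin_topology A I \<delta>) W" "p \<in> W" "W \<subseteq> XX"
    "a \<in> carrier A" "b \<in> carrier A" "\<forall>Q\<in>W. b \<notin> Q \<and> f Q = frac A Q a b"
    using Osec_reg[OF f p] unfolding regular_at_def by blast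
  obtain e where e: "e \<in> carrier A" "e \<notin> p" "{Q \<in> XX. e \<notin> Q} \<subseteq> W"
    using open_basic_nbhd[OF W(1) W(2)] by blast
  have "b \<notin> p" using W(2,6) by blast
  moreover have "\<And>Q. Q \<in> XX \<Longrightarrow> e \<notin> Q \<Longrightarrow> b \<notin> Q \<and> f Q = frac A Q a b"
  proof -
    fix Q assume "Q \<in> XX" "e \<notin> Q"
    hence "Q \<in> W" using e(3) by blast
    thus "b \<notin> Q \<and> f Q = frac A Q a b" using W(6) by blast
  qed
  ultimately show ?thesis using that W(4,5) e(1,2) by blast
qed

lemma key:
  assumes Q: "Q \<in> XD" and f: "f \<in> D"
  shows "f \<in> Q \<longleftrightarrow> f (phi Q) = frac A (phi Q) \<zero>\<^bsub>A\<^esub> \<one>\<^bsub>A\<^esub>"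
proof -
  define p where "p = phi Q"
  have p: "p \<in> XX" unfolding p_def by (rule phi_in[OF Q])
  interpret cring A by (rule cringA)
  interpret pp: primeideal p A by (rule Xprime[OF p])
  interpret Qp: primeideal Q DR by (rule diff_spec_prime[OF Q])
  have fO: "f \<in> OS" using f DsubOS by blast
  obtain a b e where c: "a \<in> carrier A" "b \<in> carrier A" "e \<in> carrier A" "e \<notin> p" "b \<notin> p"
    and loc: "\<And>Q. Q \<in> XX \<Longrightarrow> e \<notin> Q \<Longrightarrow> b \<notin> Q \<and> f Q = frac A Q a b"
    using reg_nbhd[OF fO p] by blast
  have fp: "f p = frac A p a b" using loc[OF p c(4)] by blast
  have ident: "io (e \<otimes>\<^bsub>A\<^esub> b) \<otimes>\<^bsub>DR\<^esub> f = io (e \<otimes>\<^bsub>A\<^esub> a)"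
  proof (rule O_ext)
    fix P assume P: "P \<in> XX"
    interpret Pp: primeideal P A by (rule Xprime[OF P])
    obtain c' d' where cd: "c' \<in> carrier A" "d' \<in> carrier A" "d' \<notin> P" "f P = frac A P c' d'"
      using Pp.frac_cases[OF Osec_val[OF fO P]] by blast
    show "(io (e \<otimes>\<^bsub>A\<^esub> b) \<otimes>\<^bsub>DR\<^esub> f) P = io (e \<otimes>\<^bsub>A\<^esub> a) P"
    proof (cases "e \<in> P")
      case False
      have fP: "f P = frac A P a b" "b \<notin> P" using loc[OF P False] by auto
      have "frac A P (e \<otimes>\<^bsub>A\<^esub> b \<otimes>\<^bsub>A\<^esub> a) (\<one>\<^bsub>A\<^esub> \<otimes>\<^bsub>A\<^esub> b) = frac A P (e \<otimes>\<^bsub>A\<^esub> a) \<one>\<^bsub>A\<^esub>"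
        apply (rule Pp.frac_eqI')
        using c apply algebra
        using c fP by simp_all
      thus ?thesis using P fP c Pp.frac_mul_eq[of "e \<otimes>\<^bsub>A\<^esub> b" "\<one>\<^bsub>A\<^esub>" a b]
        by (simp add: O_mult io_apply)
    next
      case True
      have "(e \<otimes>\<^bsub>A\<^esub> b \<otimes>\<^bsub>A\<^esub> c') \<otimes>\<^bsub>A\<^esub> \<one>\<^bsub>A\<^esub> \<ominus>\<^bsub>A\<^esub> (e \<otimes>\<^bsub>A\<^esub> a) \<otimes>\<^bsub>A\<^esub> (\<one>\<^bsub>A\<^esub> \<otimes>\<^bsub>A\<^esub> d')
          = e \<otimes>\<^bsub>A\<^esub> (b \<otimes>\<^bsub>A\<^esub> c' \<ominus>\<^bsub>A\<^esub> a \<otimes>\<^bsub>A\<^esub> d')"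
        using c cd by algebra
      also have "\<dots> \<in> P" using True c cd Pp.I_r_closed by simp
      finally have "frac A P (e \<otimes>\<^bsub>A\<^esub> b \<otimes>\<^bsub>A\<^esub> c') (\<one>\<^bsub>A\<^esub> \<otimes>\<^bsub>A\<^esub> d') = frac A P (e \<otimes>\<^bsub>A\<^esub> a) \<one>\<^bsub>A\<^esub>"
        using c cd by (simp add: Pp.frac_eq_iff)
      thus ?thesis using P cd c Pp.frac_mul_eq[of "e \<otimes>\<^bsub>A\<^esub> b" "\<one>\<^bsub>A\<^esub>" c' d']
        by (simp add: O_mult io_apply)
    qed
  qed (simp add: O_mult iota'_def)
  have ioQ: "\<And>x. x \<in> carrier A \<Longrightarrow> io x \<in> Q \<longleftrightarrow> x \<in> p" unfolding p_def by simp
  have ebQ: "io (e \<otimes>\<^bsub>A\<^esub> b) \<notin> Q" using ioQ[of "e \<otimes>\<^bsub>A\<^esub> b"] c by simp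
  have ebD: "io (e \<otimes>\<^bsub>A\<^esub> b) \<in> carrier DR" using io_D c by simp
  have fD: "f \<in> carrier DR" using f by simp
  show ?thesis unfolding p_def[symmetric]
  proof
    assume "f \<in> Q"
    hence "io (e \<otimes>\<^bsub>A\<^esub> b) \<otimes>\<^bsub>DR\<^esub> f \<in> Q" using Qp.I_l_closed ebD by blast
    hence "e \<otimes>\<^bsub>A\<^esub> a \<in> p" using ident ioQ[of "e \<otimes>\<^bsub>A\<^esub> a"] c by simp
    hence "a \<in> p" using c by simp
    thus "f p = frac A p \<zero>\<^bsub>A\<^esub> \<one>\<^bsub>A\<^esub>" using fp c pp.frac_zero_iff by simp
  next
    assume "f p = frac A p \<zero>\<^bsub>A\<^esub> \<one>\<^bsub>A\<^esub>"
    hence "a \<in> p" using fp c pp.frac_zero_iff by simp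
    hence "e \<otimes>\<^bsub>A\<^esub> a \<in> p" using c pp.I_l_closed by simp
    hence "io (e \<otimes>\<^bsub>A\<^esub> b) \<otimes>\<^bsub>DR\<^esub> f \<in> Q" using ident ioQ[of "e \<otimes>\<^bsub>A\<^esub> a"] c by simp
    thus "f \<in> Q" using Qp.I_prime[OF ebD fD] ebQ by blast
  qed
qed

lemma psi_phi: assumes Q: "Q \<in> XD" shows "psi (phi Q) = Q"
proof -
  interpret Qp: primeideal Q DR by (rule diff_spec_prime[OF Q])
  have "Q \<subseteq> D" using Qp.a_subset by simp
  thus ?thesis using key[OF Q] by blast
qed


lemma cont_phi: "continuous_map (kolchin_topology DR I (O_der A I \<delta>)) (kolchin_topology A I \<delta>) phi"
  unfolding continuous_map
proof (intro conjI allI impI)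
  show "phi ` topspace (kolchin_topology DR I (O_der A I \<delta>)) \<subseteq> topspace (kolchin_topology A I \<delta>)"
    using phi_in by (auto simp: topspace_kolchin)
next
  fix U assume "openin (kolchin_topology A I \<delta>) U"
  then obtain E where E: "E \<subseteq> carrier A" "U = XX - kolchin_V A I \<delta> E" unfolding openin_kolchin by blast
  have "{Q \<in> topspace (kolchin_topology DR I (O_der A I \<delta>)). phi Q \<in> U} = XD - kolchin_V DR I (O_der A I \<delta>) (io ` E)"
  proof (rule Set.set_eqI)
    fix Q show "Q \<in> {Q \<in> topspace (kolchin_topology DR I (O_der A I \<delta>)). phi Q \<in> U} \<longleftrightarrow>
      Q \<in> XD - kolchin_V DR I (O_der A I \<delta>) (io ` E)"
    proof (cases "Q \<in> XD")
      case True
      have "phi Q \<in> U \<longleftrightarrow> \<not> E \<subseteq> phi Q" using phi_in[OF True] E unfolding kolchin_V_def by blast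
      also have "\<dots> \<longleftrightarrow> \<not> io ` E \<subseteq> Q" using E by blast
      finally show ?thesis using True by (simp add: topspace_kolchin kolchin_V_def)
    next
      case False thus ?thesis by (simp add: topspace_kolchin)
    qed
  qed
  moreover have "io ` E \<subseteq> carrier DR" using E io_D by auto
  ultimately show "openin (kolchin_topology DR I (O_der A I \<delta>)) {Q \<in> topspace (kolchin_topology DR I (O_der A I \<delta>)). phi Q \<in> U}"
    unfolding openin_kolchin by blast
qed

lemma cont_psi: "continuous_map (kolchin_topology A I \<delta>) (kolchin_topology DR I (O_der A I \<delta>)) psi"
  unfolding continuous_map
proof (intro conjI allI impI)
  show "psi ` topspace (kolchin_topology A I \<delta>) \<subseteq> topspace (kolchin_topology DR I (O_der A I \<delta>))"
    using psi_in by (auto simp: topspace_kolchin)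
next
  fix U assume "openin (kolchin_topology DR I (O_der A I \<delta>)) U"
  then obtain F where F: "F \<subseteq> D" "U = XD - kolchin_V DR I (O_der A I \<delta>) F" unfolding openin_kolchin by auto
  let ?S = "{p \<in> topspace (kolchin_topology A I \<delta>). psi p \<in> U}"
  have S: "?S = {p \<in> XX. \<exists>f\<in>F. f p \<noteq> frac A p \<zero>\<^bsub>A\<^esub> \<one>\<^bsub>A\<^esub>}"
    using psi_in F unfolding kolchin_V_def by (auto simp: topspace_kolchin)
  show "openin (kolchin_topology A I \<delta>) ?S"
    unfolding S openin_subopen[of _ "{p \<in> XX. \<exists>f\<in>F. f p \<noteq> frac A p \<zero>\<^bsub>A\<^esub> \<one>\<^bsub>A\<^esub>}"]
  proof
    fix p assume "p \<in> {p \<in> XX. \<exists>f\<in>F. f p \<noteq> frac A p \<zero>\<^bsub>A\<^esub> \<one>\<^bsub>A\<^esub>}"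
    then obtain f where p: "p \<in> XX" and f: "f \<in> F" and fp: "f p \<noteq> frac A p \<zero>\<^bsub>A\<^esub> \<one>\<^bsub>A\<^esub>" by blast
    interpret cring A by (rule cringA)
    interpret pp: primeideal p A by (rule Xprime[OF p])
    have fO: "f \<in> OS" using f F DsubOS by blast
    obtain a b e where c: "a \<in> carrier A" "b \<in> carrier A" "e \<in> carrier A" "e \<notin> p" "b \<notin> p"
      and loc: "\<And>Q. Q \<in> XX \<Longrightarrow> e \<notin> Q \<Longrightarrow> b \<notin> Q \<and> f Q = frac A Q a b"
      using reg_nbhd[OF fO p] by blast
    have "a \<notin> p" using fp loc[OF p c(4)] c pp.frac_zero_iff by auto
    hence "p \<in> {Q \<in> XX. e \<otimes>\<^bsub>A\<^esub> a \<notin> Q}" using p c by simp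
    moreover have "openin (kolchin_topology A I \<delta>) {Q \<in> XX. e \<otimes>\<^bsub>A\<^esub> a \<notin> Q}"
      by (rule basic_open) (simp add: c)
    moreover have "{Q \<in> XX. e \<otimes>\<^bsub>A\<^esub> a \<notin> Q} \<subseteq> {p \<in> XX. \<exists>f\<in>F. f p \<noteq> frac A p \<zero>\<^bsub>A\<^esub> \<one>\<^bsub>A\<^esub>}"
    proof
      fix Q assume Q: "Q \<in> {Q \<in> XX. e \<otimes>\<^bsub>A\<^esub> a \<notin> Q}"
      hence QX: "Q \<in> XX" by simp
      interpret Qp: primeideal Q A by (rule Xprime[OF QX])
      have "e \<notin> Q" "a \<notin> Q" using Q c Qp.prod_notin by auto
      hence "f Q \<noteq> frac A Q \<zero>\<^bsub>A\<^esub> \<one>\<^bsub>A\<^esub>" using loc[OF QX] c Qp.frac_zero_iff by auto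
      thus "Q \<in> {p \<in> XX. \<exists>f\<in>F. f p \<noteq> frac A p \<zero>\<^bsub>A\<^esub> \<one>\<^bsub>A\<^esub>}" using QX f by blast
    qed
    ultimately show "\<exists>T. openin (kolchin_topology A I \<delta>) T \<and> p \<in> T \<and> T \<subseteq> {p \<in> XX. \<exists>f\<in>F. f p \<noteq> frac A p \<zero>\<^bsub>A\<^esub> \<one>\<^bsub>A\<^esub>}"
      by blast
  qed
qed

lemma main: "homeomorphic_map (kolchin_topology DR I (O_der A I \<delta>)) (kolchin_topology A I \<delta>) phi"
  unfolding homeomorphic_map_maps homeomorphic_maps_def topspace_kolchin
  apply (rule exI[where x="\<lambda>p. psi p"])
  using cont_phi cont_psi psi_phi phi_psi by simp

end

theorem theorem2p6:
  fixes A :: "('a, 'm) ring_scheme" and I :: "'i set" and \<delta> :: "'i \<Rightarrow> 'a \<Rightarrow> 'a"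
    and D :: "('a set \<Rightarrow> ('a \<times> 'a) set) set"
  assumes "diff_ring A I \<delta>"
    and "subring D (O_ring A I \<delta>)"
    and "\<forall>i\<in>I. \<forall>f\<in>D. O_der A I \<delta> i f \<in> D"
    and "iota' A I \<delta> ` carrier A \<subseteq> D"
  shows "homeomorphic_map
           (kolchin_topology ((O_ring A I \<delta>)\<lparr>carrier := D\<rparr>) I (O_der A I \<delta>))
           (kolchin_topology A I \<delta>)
           (\<lambda>Q. {a \<in> carrier A. iota' A I \<delta> a \<in> Q})"
proof -
  interpret mctx A I \<delta> D
    using assms by (simp add: mctx_def mctx_axioms_def dctx_def)
  show ?thesis by (rule main)
qed

end
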